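(* Let $m\ge n\ge1$, let $B=\{\cos(\theta)|0\rangle+\sin(\theta)|1\rangle\mid0\le\theta<2\pi\}$ and $B^{\otimes n}=\{|b_1\rangle\otimes\cdots\otimes|b_n\rangle\mid|b_j\rangle\in B\}$. Let $\mathcal E=\{\sqrt{p_i}U_i\mid1\le i\le N\}$ with each $U_i$ unitary on $\mathcal H_{2^m}$ and $\sum_ip_i=1$, let $\rho_a$ be an $(m-n)$-qubit density matrix and $\rho_0$ an $m$-qubit density matrix. If $[B^{\otimes n},\mathcal E,\rho_a,\rho_0]$ is a private quantum channel, then $H(p_1,\dots,p_N)\ge n$, and in particular $N\ge2^n$.
   Context: $\mathcal{H}_{2^k}$ denotes the Hilbert space of $k$ qubits. $H(p_1,\dots,p_N)=-\sum_ip_i\log_2p_i$. Definition (private quantum channel, PQC): for a set $\mathcal S\subseteq\mathcal H_{2^n}$ of pure $n$-qubit states, $\mathcal E=\{\sqrt{p_i}U_i\}$ with $U_i$ unitary on $\mathcal H_{2^m}$, $p_i\ge0$, $\sum_ip_i=1$, $\rho_a$ an $(m-n)$-qubit density matrix and $\rho_0$ an $m$-qubit density matrix, $[\mathcal S,\mathcal E,\rho_a,\rho_0]$ is a PQC iff for all $|\phi\rangle\in\mathcal S$, $\sum_ip_iU_i(|\phi\rangle\langle\phi|\otimes\rho_a)U_i^\dagger=\rho_0$. *)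

theory Defs
  imports Complex_Main "Jordan_Normal_Form.Matrix"
begin

definition adj :: "complex mat \<Rightarrow> complex mat" where
  "adj A = mat (dim_col A) (dim_row A) (\<lambda>(i,j). cnj (A $$ (j,i)))"

definition unitary :: "nat \<Rightarrow> complex mat \<Rightarrow> bool" where
  "unitary d U \<longleftrightarrow> U \<in> carrier_mat d d \<and> adj U * U = 1\<^sub>m d \<and> U * adj U = 1\<^sub>m d"

definition mtrace :: "complex mat \<Rightarrow> complex" where
  "mtrace A = (\<Sum>i<dim_row A. A $$ (i,i))"

definition density :: "nat \<Rightarrow> complex mat \<Rightarrow> bool" where
  "density d \<rho> \<longleftrightarrow> \<rho> \<in> carrier_mat d d \<and> adj \<rho> = \<rho> \<and> mtrace \<rho> = 1 \<and>
     (\<forall>v \<in> carrier_vec d. 0 \<le> Re (conjugate v \<bullet> (\<rho> *\<^sub>v v)))"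

(* Kronecker (tensor) products; the first factor is the most significant index *)
definition kron_mat :: "complex mat \<Rightarrow> complex mat \<Rightarrow> complex mat" where
  "kron_mat A B = mat (dim_row A * dim_row B) (dim_col A * dim_col B)
     (\<lambda>(i,j). A $$ (i div dim_row B, j div dim_col B) * B $$ (i mod dim_row B, j mod dim_col B))"

definition kron_vec :: "complex vec \<Rightarrow> complex vec \<Rightarrow> complex vec" where
  "kron_vec v w = vec (dim_vec v * dim_vec w) (\<lambda>i. v $ (i div dim_vec w) * w $ (i mod dim_vec w))"

definition ketbra :: "complex vec \<Rightarrow> complex mat" where
  "ketbra v = mat (dim_vec v) (dim_vec v) (\<lambda>(i,j). v $ i * cnj (v $ j))"

definition bstate :: "real \<Rightarrow> complex vec" where
  "bstate t = vec_of_list [complex_of_real (cos t), complex_of_real (sin t)]"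

definition tensor_list :: "complex vec list \<Rightarrow> complex vec" where
  "tensor_list vs = foldr kron_vec vs (vec 1 (\<lambda>_. 1))"

definition Btensor :: "nat \<Rightarrow> complex vec set" where
  "Btensor n = {tensor_list (map bstate ts) | ts. length ts = n \<and> (\<forall>t \<in> set ts. 0 \<le> t \<and> t < 2 * pi)}"

definition msum :: "nat \<Rightarrow> nat \<Rightarrow> (nat \<Rightarrow> complex mat) \<Rightarrow> complex mat" where
  "msum d N f = mat d d (\<lambda>(i,j). \<Sum>k<N. f k $$ (i,j))"

(* [S, E = {sqrt(p_i) U_i | i < N}, rho_a, rho_0] is a private quantum channel
   (n-qubit states, m-qubit unitaries); indices 0..N-1 *)
definition PQC :: "nat \<Rightarrow> nat \<Rightarrow> complex vec set \<Rightarrow> nat \<Rightarrow> (nat \<Rightarrow> real) \<Rightarrow> (nat \<Rightarrow> complex mat)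
    \<Rightarrow> complex mat \<Rightarrow> complex mat \<Rightarrow> bool" where
  "PQC n m S N p U \<rho>a \<rho>0 \<longleftrightarrow>
     S \<subseteq> carrier_vec (2^n) \<and> (\<forall>\<phi>\<in>S. conjugate \<phi> \<bullet> \<phi> = 1) \<and>
     (\<forall>i<N. 0 \<le> p i \<and> unitary (2^m) (U i)) \<and> (\<Sum>i<N. p i) = 1 \<and>
     density (2^(m-n)) \<rho>a \<and> density (2^m) \<rho>0 \<and>
     (\<forall>\<phi>\<in>S. msum (2^m) N (\<lambda>i. complex_of_real (p i) \<cdot>\<^sub>m
         (U i * kron_mat (ketbra \<phi>) \<rho>a * adj (U i))) = \<rho>0)"

definition entropy :: "nat \<Rightarrow> (nat \<Rightarrow> real) \<Rightarrow> real" where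
  "entropy N p = - (\<Sum>i<N. (if p i = 0 then 0 else p i * log 2 (p i)))"

end

theory Submission
  imports Defs
begin

lemma sum_split: "(\<Sum>x<A*r. g x) = (\<Sum>s<A. \<Sum>a<r. g (s*r+a::nat))"
proof (induction A)
  case 0 then show ?case by simp
next
  case (Suc A)
  have "(\<Sum>x<Suc A*r. g x) = (\<Sum>x<A*r. g x) + (\<Sum>x\<in>{A*r..<A*r+r}. g x)"
    by (simp add: add.commute lessThan_atLeast0 sum.atLeastLessThan_concat)
  also have "(\<Sum>x\<in>{A*r..<A*r+r}. g x) = (\<Sum>a<r. g (A*r+a))"
    by (rule sum.reindex_bij_witness[of _ "\<lambda>a. A*r+a" "\<lambda>x. x - A*r"]) auto
  finally show ?case using Suc by simp
qed

lemma bstate0: "bstate 0 = unit_vec 2 0"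
  by (rule eq_vecI) (auto simp: bstate_def less_2_cases_iff)

lemma bstate1: "bstate (pi/2) = unit_vec 2 1"
  by (rule eq_vecI) (auto simp: bstate_def less_2_cases_iff)

lemma kron_unit: assumes "b < 2" "k < M"
  shows "kron_vec (unit_vec 2 b) (unit_vec M k) = unit_vec (2*M) (b*M+k)"
proof (rule eq_vecI)
  show "dim_vec (kron_vec (unit_vec 2 b) (unit_vec M k)) = dim_vec (unit_vec (2*M) (b*M+k))"
    by (simp add: kron_vec_def)
  fix i assume "i < dim_vec (unit_vec (2*M) (b*M+k))"
  then have i: "i < 2*M" by simp
  then have "i div M < 2" by (simp add: less_mult_imp_div_less mult.commute)
  moreover have "(i div M = b \<and> i mod M = k) \<longleftrightarrow> i = b*M+k"
    using assms by (metis add.commute div_mult_self2 div_less mod_mult_self2 mod_less div_mult_mod_eq not_less0 add_0 mult_0_right mult.commute)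
  ultimately show "kron_vec (unit_vec 2 b) (unit_vec M k) $ i = unit_vec (2*M) (b*M+k) $ i"
    using i assms by (auto simp: kron_vec_def unit_vec_def)
qed

lemma unit_in_Btensor: "k < 2^n \<Longrightarrow> unit_vec (2^n) k \<in> Btensor n"
proof (induction n arbitrary: k)
  case 0
  then have "k = 0" by simp
  then show ?case unfolding Btensor_def tensor_list_def
    by (auto intro!: exI[of _ "[]"] eq_vecI)
next
  case (Suc n)
  define b where "b = k div 2^n"
  define k' where "k' = k mod 2^n"
  have b: "b < 2" using Suc.prems by (simp add: b_def less_mult_imp_div_less)
  have k': "k' < 2^n" by (simp add: k'_def)
  have kk: "k = b*2^n + k'" unfolding b_def k'_def by (rule div_mult_mod_eq[symmetric])
  obtain ts where ts: "unit_vec (2^n) k' = tensor_list (map bstate ts)" "length ts = n"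
     "\<forall>t\<in>set ts. 0 \<le> t \<and> t < 2*pi"
    using Suc.IH[OF k'] unfolding Btensor_def by auto
  define t where "t = (if b = 0 then 0 else pi/2)"
  have bt: "bstate t = unit_vec 2 b" using b bstate0 bstate1 by (auto simp: t_def less_2_cases_iff)
  have t: "0 \<le> t \<and> t < 2*pi" using pi_gt_zero by (auto simp: t_def)
  have "tensor_list (map bstate (t#ts)) = kron_vec (unit_vec 2 b) (unit_vec (2^n) k')"
    using ts bt by (simp add: tensor_list_def)
  also have "\<dots> = unit_vec (2^Suc n) k" using kron_unit[OF b k'] kk by simp
  finally show ?case unfolding Btensor_def using ts t
    by (auto intro!: exI[of _ "t#ts"])
qed


lemma quad_form: assumes "A \<in> carrier_mat d d" "w \<in> carrier_vec d"
  shows "conjugate w \<bullet> (A *\<^sub>v w) = (\<Sum>x<d. \<Sum>y<d. cnj (w$x) * A$$(x,y) * w$y)"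
  using assms by (simp add: scalar_prod_def lessThan_atLeast0 sum_distrib_left mult.assoc)

lemma idx_lt: "s < A \<Longrightarrow> a < r \<Longrightarrow> s*r+a < A*(r::nat)"
proof -
  assume "s < A" "a < r"
  then have "s*r+a < (s+1)*r" "(s+1)*r \<le> A*r" using mult_le_mono1[of "s+1" A r] by simp_all
  then show ?thesis by linarith
qed

lemma delta2: assumes "k < (A::nat)"
  shows "(\<Sum>s<A. \<Sum>a<r. \<Sum>t<A. \<Sum>b<(r::nat). if s = k \<and> t = k then f s a t b else (0::complex))
     = (\<Sum>a<r. \<Sum>b<r. f k a k b)"
proof -
  have 1: "(\<Sum>b<r. if P then g b else (0::complex)) = (if P then \<Sum>b<r. g b else 0)" for P g
    by (cases P) simp_all
  have "(\<Sum>s<A. \<Sum>a<r. \<Sum>t<A. \<Sum>b<r. if s = k \<and> t = k then f s a t b else (0::complex))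
     = (\<Sum>s<A. \<Sum>a<r. \<Sum>t<A. if t = k then (if s = k then \<Sum>b<r. f s a t b else 0) else 0)"
    by (intro sum.cong refl) (auto simp: 1)
  also have "\<dots> = (\<Sum>s<A. if s = k then (\<Sum>a<r. \<Sum>b<r. f s a k b) else 0)"
    using assms by (intro sum.cong refl) (auto simp: sum.delta')
  also have "\<dots> = (\<Sum>a<r. \<Sum>b<r. f k a k b)"
    using assms by (simp add: sum.delta')
  finally show ?thesis .
qed

lemma kron_form: assumes k: "k < A" and rho: "\<rho> \<in> carrier_mat r r" and w: "w \<in> carrier_vec (A*r)"
  shows "conjugate w \<bullet> (kron_mat (ketbra (unit_vec A k)) \<rho> *\<^sub>v w)
     = conjugate (vec r (\<lambda>a. w $ (k*r+a))) \<bullet> (\<rho> *\<^sub>v vec r (\<lambda>a. w $ (k*r+a)))"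
proof -
  let ?K = "kron_mat (ketbra (unit_vec A k)) \<rho>"
  let ?u = "vec r (\<lambda>a. w $ (k*r+a))"
  have K: "?K \<in> carrier_mat (A*r) (A*r)" using rho by (simp add: kron_mat_def ketbra_def)
  have Kidx: "?K $$ (s*r+a, t*r+b) = (if s = k \<and> t = k then \<rho> $$ (a,b) else 0)"
    if "s < A" "t < A" "a < r" "b < r" for s t a b
  proof -
    have "s*r+a < A*r" "t*r+b < A*r" using that by (simp_all add: idx_lt)
    then show ?thesis using that k rho by (auto simp: kron_mat_def ketbra_def unit_vec_def)
  qed
  have "conjugate w \<bullet> (?K *\<^sub>v w) = (\<Sum>x<A*r. \<Sum>y<A*r. cnj (w$x) * ?K$$(x,y) * w$y)"
    by (rule quad_form[OF K w])
  also have "\<dots> = (\<Sum>s<A. \<Sum>a<r. \<Sum>t<A. \<Sum>b<r. cnj (w$(s*r+a)) * ?K$$(s*r+a,t*r+b) * w$(t*r+b))"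
    by (simp add: sum_split)
  also have "\<dots> = (\<Sum>s<A. \<Sum>a<r. \<Sum>t<A. \<Sum>b<r. if s = k \<and> t = k then cnj (w$(s*r+a)) * \<rho>$$(a,b) * w$(t*r+b) else 0)"
    by (intro sum.cong refl) (simp add: Kidx)
  also have "\<dots> = (\<Sum>a<r. \<Sum>b<r. cnj (w$(k*r+a)) * \<rho>$$(a,b) * w$(k*r+b))"
    using k by (rule delta2)
  also have "\<dots> = conjugate ?u \<bullet> (\<rho> *\<^sub>v ?u)"
    by (subst quad_form[OF rho]) auto
  finally show ?thesis .
qed


lemma adj_carrier[simp]: "U \<in> carrier_mat a b \<Longrightarrow> adj U \<in> carrier_mat b a"
  by (simp add: adj_def)

lemma adj_form: assumes U: "U \<in> carrier_mat d d" and v: "v \<in> carrier_vec d" and z: "z \<in> carrier_vec d"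
  shows "conjugate v \<bullet> (U *\<^sub>v z) = conjugate (adj U *\<^sub>v v) \<bullet> z"
proof -
  have "conjugate v \<bullet> (U *\<^sub>v z) = (\<Sum>x<d. \<Sum>y<d. cnj (v$x) * U$$(x,y) * z$y)"
    using U v z by (simp add: scalar_prod_def lessThan_atLeast0 sum_distrib_left mult.assoc)
  also have "\<dots> = (\<Sum>y<d. \<Sum>x<d. cnj (v$x) * U$$(x,y) * z$y)" by (rule sum.swap)
  also have "\<dots> = conjugate (adj U *\<^sub>v v) \<bullet> z"
    using U v z by (simp add: scalar_prod_def lessThan_atLeast0 sum_distrib_right sum_distrib_left adj_def mult_ac)
  finally show ?thesis .
qed

lemma smult_form: fixes a :: complex and M :: "complex mat" assumes M: "M \<in> carrier_mat d d" and v: "v \<in> carrier_vec d"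
  shows "conjugate v \<bullet> ((a \<cdot>\<^sub>m M) *\<^sub>v v) = a * (conjugate v \<bullet> (M *\<^sub>v v))"
proof -
  have aM: "a \<cdot>\<^sub>m M \<in> carrier_mat d d" using M by simp
  show ?thesis using M v by (simp add: quad_form[OF aM v] quad_form[OF M v] sum_distrib_left mult_ac)
qed

lemma msum_form: assumes f: "\<And>j. j < N \<Longrightarrow> f j \<in> carrier_mat d d" and v: "v \<in> carrier_vec d"
  shows "conjugate v \<bullet> (msum d N f *\<^sub>v v) = (\<Sum>j<N. conjugate v \<bullet> (f j *\<^sub>v v))"
proof -
  have ms: "msum d N f \<in> carrier_mat d d" by (simp add: msum_def)
  have "conjugate v \<bullet> (msum d N f *\<^sub>v v) = (\<Sum>x<d. \<Sum>y<d. \<Sum>j<N. cnj (v$x) * f j $$(x,y) * v$y)"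
    using quad_form[OF ms v] by (simp add: msum_def sum_distrib_left sum_distrib_right)
  also have "\<dots> = (\<Sum>j<N. \<Sum>x<d. \<Sum>y<d. cnj (v$x) * f j $$(x,y) * v$y)"
    by (subst sum.swap, rule sum.cong, rule refl, rule sum.swap)
  also have "\<dots> = (\<Sum>j<N. conjugate v \<bullet> (f j *\<^sub>v v))"
    by (rule sum.cong[OF refl], rule quad_form[OF f v, symmetric], simp)
  finally show ?thesis .
qed

lemma trace_form: assumes U: "unitary d U" and rho: "\<rho> \<in> carrier_mat d d"
  shows "(\<Sum>c<d. conjugate (col U c) \<bullet> (\<rho> *\<^sub>v col U c)) = mtrace \<rho>"
proof -
  have Uc: "U \<in> carrier_mat d d" and UU: "U * adj U = 1\<^sub>m d" using U by (auto simp: unitary_def)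
  have e: "(\<Sum>c<d. U$$(y,c) * cnj (U$$(x,c))) = (if y = x then 1 else 0)" if "x < d" "y < d" for x y
  proof -
    have "(U * adj U) $$ (y,x) = (\<Sum>c<d. U$$(y,c) * cnj (U$$(x,c)))"
      using Uc that by (simp add: scalar_prod_def lessThan_atLeast0 adj_def)
    then show ?thesis using UU that by simp
  qed
  have "(\<Sum>c<d. conjugate (col U c) \<bullet> (\<rho> *\<^sub>v col U c)) = (\<Sum>c<d. \<Sum>x<d. \<Sum>y<d. cnj (U$$(x,c)) * \<rho>$$(x,y) * U$$(y,c))"
    using Uc rho by (intro sum.cong refl) (simp add: quad_form[OF rho])
  also have "\<dots> = (\<Sum>x<d. \<Sum>y<d. \<rho>$$(x,y) * (\<Sum>c<d. U$$(y,c) * cnj (U$$(x,c))))"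
  proof -
    have "(\<Sum>c<d. \<Sum>x<d. \<Sum>y<d. cnj (U$$(x,c)) * \<rho>$$(x,y) * U$$(y,c)) =
          (\<Sum>x<d. \<Sum>c<d. \<Sum>y<d. cnj (U$$(x,c)) * \<rho>$$(x,y) * U$$(y,c))" by (rule sum.swap)
    also have "\<dots> = (\<Sum>x<d. \<Sum>y<d. \<Sum>c<d. cnj (U$$(x,c)) * \<rho>$$(x,y) * U$$(y,c))"
      by (rule sum.cong[OF refl], rule sum.swap)
    finally show ?thesis by (simp add: sum_distrib_left mult_ac)
  qed
  also have "\<dots> = (\<Sum>x<d. \<Sum>y<d. if y = x then \<rho>$$(x,y) else 0)"
    by (intro sum.cong refl) (simp add: e)
  also have "\<dots> = mtrace \<rho>" using rho by (simp add: mtrace_def sum.delta)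
  finally show ?thesis .
qed

lemma conj_unit: "conjugate (unit_vec d c) = (unit_vec d c :: complex vec)"
  by (rule eq_vecI) (auto simp: unit_vec_def)


lemma quad_unit: fixes \<rho> :: "complex mat" assumes "\<rho> \<in> carrier_mat r r" "j < r"
  shows "conjugate (unit_vec r j) \<bullet> (\<rho> *\<^sub>v unit_vec r j) = \<rho> $$ (j,j)"
  using assms by (simp add: conj_unit)

lemma p_bound:
  assumes pqc: "PQC n m (Btensor n) N p U \<rho>a \<rho>0" and nm: "n \<le> m" and i: "i < N"
  shows "p i * 2^n \<le> 1"
proof -
  define d where "d = (2::nat)^m"
  define r where "r = (2::nat)^(m-n)"
  define A where "A = (2::nat)^n"
  have dAr: "A * r = d" unfolding A_def r_def d_def using nm by (simp add: power_add[symmetric])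
  have pj: "\<And>j. j < N \<Longrightarrow> 0 \<le> p j \<and> unitary d (U j)" using pqc by (simp add: PQC_def d_def)
  have rhoa: "density r \<rho>a" and rho0: "density d \<rho>0" using pqc by (simp_all add: PQC_def r_def d_def)
  have ra: "\<rho>a \<in> carrier_mat r r" using rhoa by (simp add: density_def)
  have r0: "\<rho>0 \<in> carrier_mat d d" using rho0 by (simp add: density_def)
  have eq: "\<And>\<phi>. \<phi> \<in> Btensor n \<Longrightarrow> msum d N (\<lambda>j. complex_of_real (p j) \<cdot>\<^sub>m
         (U j * kron_mat (ketbra \<phi>) \<rho>a * adj (U j))) = \<rho>0"
    using pqc by (simp add: PQC_def d_def)
  have Uc: "\<And>j. j < N \<Longrightarrow> U j \<in> carrier_mat d d" using pj by (simp add: unitary_def)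
  have Ui: "U i \<in> carrier_mat d d" "adj (U i) * U i = 1\<^sub>m d" "unitary d (U i)"
    using pj[OF i] by (auto simp: unitary_def)
  have key: "p i * Re (\<rho>a $$ (c mod r, c mod r)) \<le> Re (conjugate (col (U i) c) \<bullet> (\<rho>0 *\<^sub>v col (U i) c))"
    if c: "c < d" for c
  proof -
    define k where "k = c div r"
    have k: "k < A" using c dAr unfolding k_def by (metis less_mult_imp_div_less)
    have rpos: "0 < r" by (simp add: r_def)
    have ck: "c = k*r + c mod r" unfolding k_def by simp
    have cmod: "c mod r < r" using rpos by simp
    define K where "K = kron_mat (ketbra (unit_vec A k)) \<rho>a"
    have Kc: "K \<in> carrier_mat d d" using ra dAr by (simp add: K_def kron_mat_def ketbra_def)
    define v where "v = col (U i) c"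
    have v: "v \<in> carrier_vec d" using Ui c by (simp add: v_def)
    have rho0eq: "\<rho>0 = msum d N (\<lambda>j. complex_of_real (p j) \<cdot>\<^sub>m (U j * K * adj (U j)))"
      using eq[OF unit_in_Btensor[OF k[unfolded A_def]]] by (simp add: K_def A_def)
    define q where "q j = conjugate (adj (U j) *\<^sub>v v) \<bullet> (K *\<^sub>v (adj (U j) *\<^sub>v v))" for j
    have qnn: "0 \<le> Re (q j)" if j: "j < N" for j
    proof -
      have aU: "adj (U j) \<in> carrier_mat d d" using Uc[OF j] by simp
      have w: "adj (U j) *\<^sub>v v \<in> carrier_vec (A*r)" using mult_mat_vec_carrier[OF aU v] dAr by simp
      have u: "vec r (\<lambda>a. (adj (U j) *\<^sub>v v) $ (k*r+a)) \<in> carrier_vec r" by simp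
      show ?thesis unfolding q_def K_def kron_form[OF k ra w]
        using rhoa u by (simp add: density_def)
    qed
    have qi: "q i = \<rho>a $$ (c mod r, c mod r)"
    proof -
      have "adj (U i) *\<^sub>v v = col (adj (U i) * U i) c" unfolding v_def
        by (rule col_mult2[symmetric, OF adj_carrier[OF Ui(1)] Ui(1) c])
      also have "\<dots> = unit_vec d c" unfolding Ui(2) using c by simp
      finally have w: "adj (U i) *\<^sub>v v = unit_vec (A*r) c" using dAr by simp
      have "vec r (\<lambda>a. unit_vec (A*r) c $ (k*r+a)) = unit_vec r (c mod r)"
      proof (rule eq_vecI)
        fix a assume "a < dim_vec (unit_vec r (c mod r))"
        then have a: "a < r" by simp
        have "k*r+a < A*r" using idx_lt[OF k a] .
        moreover have "(k*r+a = c) = (a = c mod r)" using ck by linarith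
        ultimately show "vec r (\<lambda>a. unit_vec (A*r) c $ (k*r+a)) $ a = unit_vec r (c mod r) $ a"
          using a by (simp add: unit_vec_def)
      qed simp
      note uv = this
      show ?thesis unfolding q_def K_def w kron_form[OF k ra unit_vec_carrier] uv
        by (rule quad_unit[OF ra cmod])
    qed
    have "conjugate v \<bullet> (\<rho>0 *\<^sub>v v) = (\<Sum>j<N. complex_of_real (p j) * q j)"
    proof -
      have "conjugate v \<bullet> (\<rho>0 *\<^sub>v v) = (\<Sum>j<N. conjugate v \<bullet> ((complex_of_real (p j) \<cdot>\<^sub>m (U j * K * adj (U j))) *\<^sub>v v))"
        unfolding rho0eq
      proof (rule msum_form[OF _ v])
        fix j assume "j < N"
        then have "U j * K * adj (U j) \<in> carrier_mat d d"
          using Uc Kc by (meson adj_carrier mult_carrier_mat)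
        then show "complex_of_real (p j) \<cdot>\<^sub>m (U j * K * adj (U j)) \<in> carrier_mat d d" by simp
      qed
      also have "\<dots> = (\<Sum>j<N. complex_of_real (p j) * q j)"
      proof (rule sum.cong[OF refl])
        fix j assume "j \<in> {..<N}"
        then have j: "U j \<in> carrier_mat d d" using Uc by simp
        have M: "U j * K * adj (U j) \<in> carrier_mat d d" using j Kc by (meson adj_carrier mult_carrier_mat)
        have "(U j * K * adj (U j)) *\<^sub>v v = U j *\<^sub>v (K *\<^sub>v (adj (U j) *\<^sub>v v))"
        proof -
          have aU: "adj (U j) \<in> carrier_mat d d" using j by simp
          have UK: "U j * K \<in> carrier_mat d d" using j Kc by simp
          have "(U j * K * adj (U j)) *\<^sub>v v = (U j * K) *\<^sub>v (adj (U j) *\<^sub>v v)"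
            by (rule assoc_mult_mat_vec[OF UK aU v])
          also have "\<dots> = U j *\<^sub>v (K *\<^sub>v (adj (U j) *\<^sub>v v))"
            by (rule assoc_mult_mat_vec[OF j Kc mult_mat_vec_carrier[OF aU v]])
          finally show ?thesis .
        qed
        then show "conjugate v \<bullet> ((complex_of_real (p j) \<cdot>\<^sub>m (U j * K * adj (U j))) *\<^sub>v v) = complex_of_real (p j) * q j"
          unfolding smult_form[OF M v] q_def using adj_form[OF j v, of "K *\<^sub>v (adj (U j) *\<^sub>v v)"] j Kc v
            mult_mat_vec_carrier[OF Kc mult_mat_vec_carrier[OF adj_carrier[OF j] v]]
          by simp
      qed
      finally show ?thesis .
    qed
    then have "Re (conjugate v \<bullet> (\<rho>0 *\<^sub>v v)) = (\<Sum>j<N. p j * Re (q j))" by (simp add: Re_sum)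
    also have "\<dots> \<ge> p i * Re (q i)"
      by (rule member_le_sum[of i "{..<N}" "\<lambda>j. p j * Re (q j)"]) (use i pj qnn in auto)
    finally show ?thesis unfolding qi v_def .
  qed
  have "(\<Sum>c<d. p i * Re (\<rho>a $$ (c mod r, c mod r))) \<le> (\<Sum>c<d. Re (conjugate (col (U i) c) \<bullet> (\<rho>0 *\<^sub>v col (U i) c)))"
    by (rule sum_mono) (use key in auto)
  also have "\<dots> = Re (mtrace \<rho>0)" using trace_form[OF Ui(3) r0] by (simp add: Re_sum[symmetric])
  also have "\<dots> = 1" using rho0 by (simp add: density_def)
  finally have 1: "(\<Sum>c<d. p i * Re (\<rho>a $$ (c mod r, c mod r))) \<le> 1" .
  have "(\<Sum>c<d. p i * Re (\<rho>a $$ (c mod r, c mod r))) = (\<Sum>s<A. \<Sum>a<r. p i * Re (\<rho>a $$ ((s*r+a) mod r, (s*r+a) mod r)))"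
    unfolding dAr[symmetric] by (rule sum_split)
  also have "\<dots> = (\<Sum>s<A. p i * Re (mtrace \<rho>a))"
    using ra by (simp add: mtrace_def sum_distrib_left Re_sum)
  also have "\<dots> = p i * 2^n" using rhoa by (simp add: density_def A_def)
  finally show ?thesis using 1 by simp
qed


theorem corollary9:
  fixes m n N :: nat and p :: "nat \<Rightarrow> real" and U :: "nat \<Rightarrow> complex mat"
    and \<rho>a \<rho>0 :: "complex mat"
  assumes "1 \<le> n" and "n \<le> m"
    and "\<forall>i<N. 0 \<le> p i \<and> unitary (2^m) (U i)" and "(\<Sum>i<N. p i) = 1"
    and "density (2^(m-n)) \<rho>a" and "density (2^m) \<rho>0"
    and "PQC n m (Btensor n) N p U \<rho>a \<rho>0"
  shows "entropy N p \<ge> real n \<and> N \<ge> 2^n"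
proof -
  have pb: "p i \<le> 1 / 2^n" if "i < N" for i
    using p_bound[OF assms(7) assms(2) that] by (simp add: field_simps)
  have p0: "0 \<le> p i" if "i < N" for i using assms(3) that by simp
  have tm: "p i * real n \<le> - (if p i = 0 then 0 else p i * log 2 (p i))" if i: "i < N" for i
  proof (cases "p i = 0")
    case True then show ?thesis by simp
  next
    case False
    then have pos: "0 < p i" using p0[OF i] by simp
    have "log 2 (p i) \<le> log 2 (1 / 2^n)" using pb[OF i] pos by simp
    also have "\<dots> = - real n" by (simp add: log_divide)
    finally have "p i * real n \<le> p i * (- log 2 (p i))" using pos by (intro mult_left_mono) auto
    then show ?thesis using False by simp
  qed
  have "real n = (\<Sum>i<N. p i * real n)" using assms(4) by (simp add: sum_distrib_right[symmetric])
  also have "\<dots> \<le> (\<Sum>i<N. - (if p i = 0 then 0 else p i * log 2 (p i)))"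
    by (rule sum_mono) (use tm in auto)
  also have "\<dots> = entropy N p" by (simp add: entropy_def sum_negf)
  finally have 1: "entropy N p \<ge> real n" .
  have "(\<Sum>i<N. p i) \<le> (\<Sum>i<N. (1::real) / 2^n)" by (rule sum_mono) (use pb in auto)
  then have "1 \<le> (\<Sum>i<N. (1::real) / 2^n)" using assms(4) by simp
  then have "(2::real)^n \<le> real N" by (simp add: field_simps)
  then have "2^n \<le> N" by (metis of_nat_le_iff of_nat_numeral of_nat_power)
  with 1 show ?thesis by simp
qed

end
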